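(* For a probability measure $\mu$ on $(0,\infty)$ and real $p$, let $\mu_p:=\int_{(0,\infty)}x^{p-2}\,\mu(\mathrm{d}x)$, let $L_\mu(d):=\int_{(0,\infty)}\min\!\big(1,\tfrac{d}{x}\big)\,\mu(\mathrm{d}x)$ for $d>0$, and for $c\in(0,1)$ let $\delta_\mu$ denote the unique root $d\in(0,\infty)$ of $L_\mu(d)=c$. Then: (I) For any $c\in(0,\tfrac12]$ and any real $\mu_{3*}>0$, there exists a probability measure $\mu$ on $(0,\infty)$ with $\mu_3=\mu_{3*}$ and $\delta_\mu=c\,\mu_{3*}$. (II) For any $c\in(\tfrac12,1)$ and any real $\mu_{3*}>0$, $\mu_{1*}>0$ with $\mu_{3*}\mu_{1*}\ge1$, there exists a probability measure $\mu$ on $(0,\infty)$ with $\mu_3=\mu_{3*}$, $\mu_1=\mu_{1*}$, and $$\delta_\mu=\frac{\mu_{3*}-(2c-1)^2/\mu_{1*}}{4(1-c)}.$$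
   Context: $\mu_1=\int_{(0,\infty)}x^{-1}\,\mu(\mathrm{d}x)$ and $\mu_3=\int_{(0,\infty)}x\,\mu(\mathrm{d}x)$. For every probability measure $\mu$ on $(0,\infty)$ and $c\in(0,1)$ the equation $L_\mu(d)=c$ has a unique root in $(0,\infty)$. *)

theory Defs
  imports "HOL-Probability.Probability"
begin

definition prob_on_pos :: "real measure \<Rightarrow> bool" where
  "prob_on_pos M \<longleftrightarrow> prob_space M \<and> sets M = sets borel \<and> emeasure M {0<..} = 1"

definition mom :: "real measure \<Rightarrow> real \<Rightarrow> ennreal" where
  "mom M p = (\<integral>\<^sup>+ x. indicator {0<..} x * ennreal (x powr (p - 2)) \<partial>M)"

definition Lmu :: "real measure \<Rightarrow> real \<Rightarrow> real" where
  "Lmu M d = (\<integral> x. indicator {0<..} x * min 1 (d / x) \<partial>M)"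

definition delta :: "real measure \<Rightarrow> real \<Rightarrow> real" where
  "delta M c = (THE d. d > 0 \<and> Lmu M d = c)"

end

theory Submission
  imports Defs
begin

definition tp :: "real \<Rightarrow> real \<Rightarrow> real \<Rightarrow> real measure" where
  "tp p a b = distr (measure_pmf (bernoulli_pmf p)) borel (\<lambda>x. if x then a else b)"

lemma tp_prob:
  assumes "0 \<le> p" "p \<le> 1" "0 < a" "0 < b"
  shows "prob_on_pos (tp p a b)"
proof -
  have ps: "prob_space (tp p a b)" unfolding tp_def
    by (rule measure_pmf.prob_space_distr) simp
  have "emeasure (tp p a b) {0<..} = emeasure (measure_pmf (bernoulli_pmf p)) ((\<lambda>x. if x then a else b) -` {0<..} \<inter> UNIV)"
    unfolding tp_def by (subst emeasure_distr) auto
  also have "(\<lambda>x. if x then a else b) -` {0<..} \<inter> UNIV = UNIV" using assms by auto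
  finally show ?thesis using ps unfolding prob_on_pos_def tp_def
    by (simp add: measure_pmf.emeasure_space_1)
qed

lemma tp_mom:
  assumes "0 \<le> p" "p \<le> 1" "0 < a" "0 < b"
  shows "mom (tp p a b) k = ennreal (p * a powr (k-2) + (1-p) * b powr (k-2))"
proof -
  have "mom (tp p a b) k = (\<integral>\<^sup>+ x. indicator {0<..} (if x then a else b) * ennreal ((if x then a else b) powr (k - 2)) \<partial>measure_pmf (bernoulli_pmf p))"
    unfolding mom_def tp_def by (subst nn_integral_distr) auto
  also have "\<dots> = ennreal (a powr (k-2)) * p + ennreal (b powr (k-2)) * (1-p)"
    using assms by (subst nn_integral_bernoulli_pmf) auto
  also have "\<dots> = ennreal (p * a powr (k-2) + (1-p) * b powr (k-2))"
    using assms by (simp add: ennreal_plus[symmetric] ennreal_mult[symmetric] mult.commute del: ennreal_plus)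
  finally show ?thesis .
qed

lemma tp_L:
  assumes "0 \<le> p" "p \<le> 1" "0 < a" "0 < b"
  shows "Lmu (tp p a b) d = p * min 1 (d/a) + (1-p) * min 1 (d/b)"
proof -
  have "Lmu (tp p a b) d = (\<integral> x. indicator {0<..} (if x then a else b) * min 1 (d / (if x then a else b)) \<partial>measure_pmf (bernoulli_pmf p))"
    unfolding Lmu_def tp_def by (subst integral_distr) auto
  also have "\<dots> = p * min 1 (d/a) + (1-p) * min 1 (d/b)"
    using assms by (subst integral_bernoulli_pmf) auto
  finally show ?thesis .
qed

lemma delta_eq:
  assumes "d0 > 0" "Lmu M d0 = c" "\<And>d. d > 0 \<Longrightarrow> Lmu M d = c \<Longrightarrow> d = d0"
  shows "delta M c = d0"
  unfolding delta_def
proof (rule the_equality)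
  show "d0 > 0 \<and> Lmu M d0 = c" using assms(1,2) by simp
  fix d assume "d > 0 \<and> Lmu M d = c"
  thus "d = d0" using assms(3) by blast
qed

lemma alg:
  fixes e K m1 m3 c :: real
  assumes e: "0 < e" "e < 1" and K: "1 \<le> K" and m: "0 < m1" "0 < m3"
  and Kd: "K = m3 * m1"
  and ed: "e = 2*c - 1"
  defines "den \<equiv> K - 2*e + e^2"
  defines "p \<equiv> e * (K - 1) / den"
  defines "a \<equiv> e / m1"
  defines "b \<equiv> (K - e) / (m1 * (1 - e))"
  shows "0 \<le> p \<and> p < 1 \<and> 0 < a \<and> 0 < b \<and> a < b \<and> p * a + (1 - p) * b = m3 \<and>
     p/a + (1-p)/b = m1 \<and> p + (1-p) * (((a+b)/2)/b) = c \<and>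
     (a + b)/2 = (m3 - (2*c - 1)^2 / m1) / (4 * (1 - c))"
proof -
  have dd: "den = (K - 1) + (1-e)^2" unfolding den_def by (simp add: power2_eq_square algebra_simps)
  have den: "0 < den" unfolding dd using e K by (smt (verit) zero_less_power)
  have Ke: "K - e > 0" using e K by simp
  have p0: "0 \<le> p" unfolding p_def using e K den by simp
  have q: "1 - p = (1 - e) * (K - e) / den"
    unfolding p_def using den by (simp add: field_simps den_def power2_eq_square)
  have "(1 - e) * (K - e) / den > 0" using e Ke den by simp
  hence p1: "p < 1" using q by linarith
  have pa: "p*a = e^2*(K-1)/(den*m1)" by (simp add: p_def a_def power2_eq_square)
  have qb: "(1-p)*b = (K-e)^2/(den*m1)" unfolding q b_def using e by (simp add: power2_eq_square)
  have "p * a + (1 - p) * b = (e^2*(K-1) + (K-e)^2)/(den*m1)" unfolding pa qb by (simp add: add_divide_distrib)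
  also have "e^2*(K-1) + (K-e)^2 = K*den" by (simp add: den_def power2_eq_square algebra_simps)
  finally have f1: "p * a + (1 - p) * b = m3" using den m by (simp add: Kd)
  have pa': "p/a = m1*(K-1)/den" using e by (simp add: p_def a_def)
  have qb': "(1-p)/b = m1*(1-e)^2/den" unfolding q b_def using e Ke by (simp add: power2_eq_square)
  have "p/a + (1-p)/b = m1 * ((K-1) + (1-e)^2)/den" unfolding pa' qb' by (simp add: add_divide_distrib[symmetric] algebra_simps)
  hence f2: "p/a + (1-p)/b = m1" using den dd by simp
  have bma: "b - a = den / (m1 * (1 - e))"
      unfolding a_def b_def den_def using e m by (simp add: field_simps power2_eq_square)
  have "den / (m1 * (1 - e)) > 0" using den e m by simp
  hence ab: "a < b" using bma by linarith
  have "b / ((a+b)/2) = 2*b/(a+b)" by simp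
  have f3: "p + (1-p) * (((a+b)/2)/b) = c"
  proof -
    have ab: "a + b = (K - e^2) / (m1*(1-e))" unfolding a_def b_def using e m by (simp add: field_simps power2_eq_square)
    have qb': "(1-p)/b = m1*(1-e)^2/den" unfolding q b_def using e Ke by (simp add: power2_eq_square)
    have "(1-p) * (((a+b)/2)/b) = ((1-p)/b) * (a+b) / 2" by simp
    also have "\<dots> = (1-e)*(K-e^2)/(2*den)" unfolding qb' ab using e m by (simp add: power2_eq_square)
    finally have X: "(1-p) * (((a+b)/2)/b) = (1-e)*(K-e^2)/(2*den)" .
    have "p + (1-p) * (((a+b)/2)/b) = e*(K-1)/den + (1-e)*(K-e^2)/(2*den)"
      unfolding X by (simp add: p_def)
    also have "\<dots> = (2*e*(K-1) + (1-e)*(K-e^2))/(2*den)" using den by (simp add: field_simps)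
    finally have "p + (1-p) * (((a+b)/2)/b) = (2*e*(K-1) + (1-e)*(K-e^2))/(2*den)" .
    also have "2*e*(K-1) + (1-e)*(K-e^2) = (1+e)*den" by (simp add: den_def power2_eq_square algebra_simps)
    finally show ?thesis using den ed by simp
  qed
  have f4: "(a + b)/2 = (m3 - (2*c - 1)^2 / m1) / (4 * (1 - c))"
  proof -
    have "1 - c = (1-e)/2" using ed by simp
    have ab: "a + b = (K - e^2) / (m1*(1-e))" unfolding a_def b_def using e m by (simp add: field_simps power2_eq_square)
    show ?thesis unfolding ab \<open>1 - c = _\<close> ed[symmetric] Kd using m e by (simp add: field_simps)
  qed
  have "0 < a" using e m by (simp add: a_def)
  moreover have "0 < b" using e m Ke by (simp add: b_def)
  ultimately show ?thesis using p0 p1 ab f1 f2 f3 f4 by blast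
qed

theorem proposition1:
  shows "(\<forall>c::real. \<forall>m3::real. 0 < c \<and> c \<le> 1/2 \<and> 0 < m3 \<longrightarrow>
            (\<exists>M. prob_on_pos M \<and> mom M 3 = ennreal m3 \<and> delta M c = c * m3))
       \<and> (\<forall>c::real. \<forall>m3::real. \<forall>m1::real.
            1/2 < c \<and> c < 1 \<and> 0 < m3 \<and> 0 < m1 \<and> m3 * m1 \<ge> 1 \<longrightarrow>
            (\<exists>M. prob_on_pos M \<and> mom M 3 = ennreal m3 \<and> mom M 1 = ennreal m1 \<and>
                 delta M c = (m3 - (2*c - 1)^2 / m1) / (4 * (1 - c))))"
proof (intro conjI allI impI)
  fix c m3 :: real
  assume h: "0 < c \<and> c \<le> 1/2 \<and> 0 < m3"
  hence c: "0 < c" "c < 1" "0 < m3" by auto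
  let ?M = "tp 1 m3 m3"
  have "prob_on_pos ?M" using c by (intro tp_prob) auto
  moreover have "mom ?M 3 = ennreal m3" using c by (subst tp_mom) auto
  moreover have "delta ?M c = c * m3"
  proof (rule delta_eq)
    show "0 < c * m3" using c by simp
    show "Lmu ?M (c * m3) = c" using c by (subst tp_L) auto
    fix d assume d: "0 < d" "Lmu ?M d = c"
    hence "min 1 (d/m3) = c" using c by (subst (asm) tp_L) auto
    hence "d / m3 = c" using c by (auto simp: min_def split: if_splits)
    thus "d = c * m3" using c by (simp add: field_simps)
  qed
  ultimately show "\<exists>M. prob_on_pos M \<and> mom M 3 = ennreal m3 \<and> delta M c = c * m3" by blast
next
  fix c m3 m1 :: real
  assume h: "1/2 < c \<and> c < 1 \<and> 0 < m3 \<and> 0 < m1 \<and> m3 * m1 \<ge> 1"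
  define e where "e = 2*c - 1"
  define K where "K = m3 * m1"
  have e: "0 < e" "e < 1" using h by (auto simp: e_def)
  have K: "1 \<le> K" using h by (auto simp: K_def)
  have m: "0 < m1" "0 < m3" using h by auto
  define den where "den = K - 2*e + e^2"
  define p where "p = e * (K - 1) / den"
  define a where "a = e / m1"
  define b where "b = (K - e) / (m1 * (1 - e))"
  define dd where "dd = (a + b) / 2"
  have A: "0 \<le> p \<and> p < 1 \<and> 0 < a \<and> 0 < b \<and> a < b \<and> p * a + (1 - p) * b = m3 \<and>
     p/a + (1-p)/b = m1 \<and> p + (1-p) * (((a+b)/2)/b) = c \<and>
     (a + b)/2 = (m3 - (2*c - 1)^2 / m1) / (4 * (1 - c))"
    unfolding p_def a_def b_def den_def
    by (rule alg[OF e K m K_def e_def])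
  hence p0: "0 \<le> p" and "p < 1" and a0: "0 < a" and b0: "0 < b" and ab: "a < b"
    and f1: "p * a + (1 - p) * b = m3" and f2: "p/a + (1-p)/b = m1"
    and f3: "p + (1-p) * (dd/b) = c" and f4: "dd = (m3 - (2*c - 1)^2 / m1) / (4 * (1 - c))"
    unfolding dd_def by blast+
  let ?M = "tp p a b"
  have "prob_on_pos ?M" using p0 \<open>p < 1\<close> a0 b0 by (intro tp_prob) auto
  moreover have "mom ?M 3 = ennreal m3"
  proof -
    from f1 show ?thesis using p0 \<open>p < 1\<close> a0 b0 by (subst tp_mom) auto
  qed
  moreover have "mom ?M 1 = ennreal m1"
  proof -
    from f2 show ?thesis using p0 \<open>p < 1\<close> a0 b0 by (subst tp_mom) (auto simp: powr_minus_divide)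
  qed
  moreover have "delta ?M c = (m3 - (2*c - 1)^2 / m1) / (4 * (1 - c))"
  proof -
    have Lf: "\<And>d. Lmu ?M d = p * min 1 (d/a) + (1-p) * min 1 (d/b)"
      using p0 \<open>p < 1\<close> a0 b0 by (intro tp_L) auto
    have Ldd: "Lmu ?M dd = c"
    proof -
      have "min 1 (dd/a) = 1" "min 1 (dd/b) = dd/b" using ab a0 b0 by (auto simp: dd_def field_simps)
      hence "Lmu ?M dd = p + (1-p) * (dd/b)" by (simp add: Lf)
      also have "\<dots> = c" by (rule f3)
      finally show ?thesis .
    qed
    have "delta ?M c = dd"
    proof (rule delta_eq)
      show "0 < dd" using a0 b0 by (simp add: dd_def)
      show "Lmu ?M dd = c" by (rule Ldd)
      fix d assume d: "0 < d" "Lmu ?M d = c"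
      have mono: "\<And>x y. x < y \<Longrightarrow> x < b \<Longrightarrow> Lmu ?M x < Lmu ?M y"
      proof -
        fix x y assume xy: "x < y" "x < b"
        have "p * min 1 (x/a) \<le> p * min 1 (y/a)" using p0 xy a0
          by (intro mult_left_mono) (auto simp: divide_right_mono min_def)
        moreover have "min 1 (x/b) < min 1 (y/b)" using xy b0 by (auto simp: min_def field_simps)
        hence "(1-p) * min 1 (x/b) < (1-p) * min 1 (y/b)" using \<open>p < 1\<close> by simp
        ultimately show "Lmu ?M x < Lmu ?M y" by (simp add: Lf)
      qed
      have "dd < b" using ab by (simp add: dd_def)
      show "d = dd"
      proof (rule ccontr)
        assume "d \<noteq> dd"
        then consider "d < dd" | "dd < d" by linarith
        thus False
        proof cases
          case 1 thus False using mono[of d dd] d Ldd \<open>dd < b\<close> by simp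
        next
          case 2
          show False
          proof (cases "d < b")
            case True thus False using mono[of dd d] d Ldd 2 \<open>dd < b\<close> by simp
          next
            case False
            hence "min 1 (d/a) = 1" "min 1 (d/b) = 1" using ab a0 b0 by (auto simp: field_simps)
            hence "Lmu ?M d = 1" by (simp add: Lf)
            thus False using d h by simp
          qed
        qed
      qed
    qed
    moreover note f4
    ultimately show ?thesis by simp
  qed
  ultimately show "\<exists>M. prob_on_pos M \<and> mom M 3 = ennreal m3 \<and> mom M 1 = ennreal m1 \<and>
                 delta M c = (m3 - (2*c - 1)^2 / m1) / (4 * (1 - c))" by blast
qed

end
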